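(* In the setting of the context, the Cauchy problem \[ \partial_tu_k(x,t)+a(x)\cdot\nabla u_k(x,t)=\mathcal{J}u_k(x,t)\ \ (x\in\Sigma,\ t>0),\qquad u_k(x,0)=x_k\ \ (x\in\Sigma),\qquad k=1,\dots,D, \] has a unique global mild solution $u\in\mathcal{C}(\Sigma\times[0,+\infty);\mathbb{R}^D)$.
   Context: $D\ge1$, $\Sigma=\{x=(x_1,\dots,x_D)\in\mathbb{R}^D: x_k\ge0,\ \sum_{k=1}^Dx_k\le1\}$, and for $x\in\Sigma$ set $x_0=1-\sum_{k=1}^Dx_k$. Let $f_0,\dots,f_D:\Sigma\to[0,\infty)$ be Lipschitz continuous, $\bar f(x)=\sum_{k=0}^Dx_kf_k(x)$, $a=(a_1,\dots,a_D)$ with $a_k(x)=-(f_k(x)-\bar f(x))x_k$. Constants $\lambda_{ij}>0$, $\gamma_{ij}\in(0,1]$ are given for $i\ne j$ in $\{0,\dots,D\}$, and for continuous $\phi:\Sigma\to\mathbb{R}$ \[ \mathcal{J}\phi(x)=\sum_{\substack{i,j=1\\ i\neq j}}^D\lambda_{ij}f_i(x)[\phi(x+\gamma_{ij}x_i(e_j-e_i))-\phi(x)]+\sum_{i=1}^D\lambda_{i0}f_i(x)[\phi(x-\gamma_{i0}x_ie_i)-\phi(x)]+\sum_{j=1}^D\lambda_{0j}f_0(x)[\phi(x+\gamma_{0j}x_0e_j)-\phi(x)], \] $e_j$ the standard unit vectors of $\mathbb{R}^D$. Let $Y(x,t)$ denote the solution at time $t\in\mathbb{R}$ of $\dot y=a(y)$,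 $y(0)=x$ (this flow maps $\Sigma$ into itself). A mild solution on $[0,T)$ is a function $u\in\mathcal{C}(\Sigma\times[0,T);\mathbb{R}^D)$ satisfying, for $k=1,\dots,D$, \[ u_k(x,t)=Y_k(x,-t)+\int_0^t\mathcal{J}u_k(Y(x,s-t),s)\,ds. \] *)

theory Defs
  imports "HOL-Analysis.Analysis"
begin

text \<open>Points of the Simplex live in real^'n with D = CARD('n) \<ge> 1.
  The index set {0,...,D} is represented by 'n option, with None standing for 0.
  The standard unit vector e_j is axis j 1.\<close>

definition Simplex :: "(real ^ 'n::finite) set" where
  "Simplex = {x. (\<forall>k. 0 \<le> x $ k) \<and> (\<Sum>k\<in>UNIV. x $ k) \<le> 1}"

definition coord0 :: "real ^ 'n::finite \<Rightarrow> real" where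
  "coord0 x = 1 - (\<Sum>k\<in>UNIV. x $ k)"

definition fbar :: "(real ^ 'n \<Rightarrow> real) \<Rightarrow> ('n \<Rightarrow> real ^ 'n \<Rightarrow> real) \<Rightarrow> real ^ 'n::finite \<Rightarrow> real" where
  "fbar f0 f x = coord0 x * f0 x + (\<Sum>k\<in>UNIV. x $ k * f k x)"

definition drift :: "(real ^ 'n \<Rightarrow> real) \<Rightarrow> ('n \<Rightarrow> real ^ 'n \<Rightarrow> real) \<Rightarrow> real ^ 'n::finite \<Rightarrow> real ^ 'n" where
  "drift f0 f x = (\<chi> k. - (f k x - fbar f0 f x) * x $ k)"

definition Jop :: "('n option \<Rightarrow> 'n option \<Rightarrow> real) \<Rightarrow> ('n option \<Rightarrow> 'n option \<Rightarrow> real)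
    \<Rightarrow> (real ^ 'n \<Rightarrow> real) \<Rightarrow> ('n \<Rightarrow> real ^ 'n \<Rightarrow> real)
    \<Rightarrow> (real ^ 'n \<Rightarrow> real) \<Rightarrow> real ^ 'n::finite \<Rightarrow> real" where
  "Jop lam gam f0 f \<phi> x =
     (\<Sum>i\<in>UNIV. \<Sum>j\<in>UNIV - {i}. lam (Some i) (Some j) * f i x *
        (\<phi> (x + (gam (Some i) (Some j) * x $ i) *\<^sub>R (axis j 1 - axis i 1)) - \<phi> x))
   + (\<Sum>i\<in>UNIV. lam (Some i) None * f i x *
        (\<phi> (x - (gam (Some i) None * x $ i) *\<^sub>R axis i 1) - \<phi> x))
   + (\<Sum>j\<in>UNIV. lam None (Some j) * f0 x *
        (\<phi> (x + (gam None (Some j) * coord0 x) *\<^sub>R axis j 1) - \<phi> x))"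

text \<open>Global mild solution on \<Sigma> \<times> [0,\<infinity>), given the flow Y (Y x t = solution at time t
  of y' = a(y), y(0) = x).\<close>

definition global_mild_solution ::
  "('n option \<Rightarrow> 'n option \<Rightarrow> real) \<Rightarrow> ('n option \<Rightarrow> 'n option \<Rightarrow> real)
    \<Rightarrow> (real ^ 'n \<Rightarrow> real) \<Rightarrow> ('n \<Rightarrow> real ^ 'n \<Rightarrow> real)
    \<Rightarrow> (real ^ 'n \<Rightarrow> real \<Rightarrow> real ^ 'n)
    \<Rightarrow> ((real ^ 'n) \<times> real \<Rightarrow> real ^ 'n::finite) \<Rightarrow> bool" where
  "global_mild_solution lam gam f0 f Y u \<longleftrightarrow>
     continuous_on (Simplex \<times> {0..}) u \<and>
     (\<forall>x\<in>Simplex. \<forall>t\<ge>0. \<forall>k.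
        u (x, t) $ k = Y x (- t) $ k +
          integral {0..t} (\<lambda>s. Jop lam gam f0 f (\<lambda>y. u (y, s) $ k) (Y x (s - t))))"

end

theory Submission
  imports Defs
begin


lemma simplex_nonneg: "x \<in> Simplex \<Longrightarrow> 0 \<le> x $ k"
  by (simp add: Simplex_def)
lemma simplex_sum: "x \<in> Simplex \<Longrightarrow> (\<Sum>k\<in>UNIV. x $ k) \<le> 1"
  by (simp add: Simplex_def)
lemma simplex_le1: "x \<in> Simplex \<Longrightarrow> x $ k \<le> 1"
proof -
  assume x: "x \<in> Simplex"
  have "x $ k \<le> (\<Sum>k\<in>UNIV. x $ k)"
    by (rule member_le_sum) (auto simp: simplex_nonneg[OF x])
  with simplex_sum[OF x] show ?thesis by simp
qed
lemma coord0_nonneg: "x \<in> Simplex \<Longrightarrow> 0 \<le> coord0 x"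
  by (simp add: coord0_def Simplex_def)
lemma coord0_le1: "x \<in> Simplex \<Longrightarrow> coord0 x \<le> 1"
  by (simp add: coord0_def Simplex_def sum_nonneg)
lemma simplex_norm: "x \<in> Simplex \<Longrightarrow> norm x \<le> 1"
  using norm_le_l1_cart[of x] simplex_sum[of x] simplex_nonneg[of x] by simp

lemma simplex_closed: "closed Simplex"
proof -
  have e: "Simplex = {x::real^'a. \<forall>i. 0 \<le> x$i} \<inter> {x. (\<Sum>k\<in>UNIV. x $ k) \<le> 1}"
    by (auto simp: Simplex_def)
  have "closed {x::real^'a. (\<Sum>k\<in>UNIV. x $ k) \<le> 1}"
    by (intro closed_Collect_le continuous_on_sum continuous_on_component continuous_on_id continuous_on_const)
  then show ?thesis unfolding e by (intro closed_Int closed_positive_orthant)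
qed
lemma simplex_bounded: "bounded Simplex"
  by (metis bounded_iff simplex_norm)
lemma simplex_compact: "compact Simplex"
  by (simp add: compact_eq_bounded_closed simplex_closed simplex_bounded)
lemma simplex_zero: "0 \<in> Simplex"
  by (simp add: Simplex_def)
lemma simplex_convex: "convex Simplex"
  unfolding convex_def
proof (intro allI ballI impI)
  fix x y :: "real^'a" and u v :: real
  assume x: "x \<in> Simplex" and y: "y \<in> Simplex" and uv: "0 \<le> u" "0 \<le> v" "u + v = 1"
  have "(\<Sum>k\<in>UNIV. (u *\<^sub>R x + v *\<^sub>R y) $ k) = u * (\<Sum>k\<in>UNIV. x $ k) + v * (\<Sum>k\<in>UNIV. y $ k)"
    by (simp add: sum.distrib sum_distrib_left)
  also have "\<dots> \<le> u * 1 + v * 1"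
    using uv simplex_sum[OF x] simplex_sum[OF y] by (intro add_mono mult_left_mono) auto
  finally have s1: "(\<Sum>k\<in>UNIV. (u *\<^sub>R x + v *\<^sub>R y) $ k) \<le> 1" using uv(3) by simp
  have "0 \<le> (u *\<^sub>R x + v *\<^sub>R y) $ k" for k
    using uv simplex_nonneg[OF x, of k] simplex_nonneg[OF y, of k] by simp
  with s1 show "u *\<^sub>R x + v *\<^sub>R y \<in> Simplex" unfolding Simplex_def by blast
qed

lemma sum_axis: "(\<Sum>k\<in>UNIV. axis j (1::real) $ k) = 1"
  by (simp add: axis_def)
lemma sum_addscale: "(\<Sum>k\<in>UNIV. (x + c *\<^sub>R v) $ k) = (\<Sum>k\<in>UNIV. x $ k) + c * (\<Sum>k\<in>UNIV. (v::real^'a) $ k)"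
  by (simp add: sum.distrib sum_distrib_left)
lemma sum_subscale: "(\<Sum>k\<in>UNIV. (x - c *\<^sub>R v) $ k) = (\<Sum>k\<in>UNIV. x $ k) - c * (\<Sum>k\<in>UNIV. (v::real^'a) $ k)"
  by (simp add: sum_subtractf sum_distrib_left)

lemma shift1_in:
  assumes x: "x \<in> Simplex" and g: "0 \<le> g" "g \<le> 1" and ij: "i \<noteq> j"
  shows "x + (g * x $ i) *\<^sub>R (axis j 1 - axis i 1) \<in> Simplex"
proof -
  have xi: "0 \<le> x $ i" using simplex_nonneg[OF x] .
  have "(\<Sum>k\<in>UNIV. (x + (g * x $ i) *\<^sub>R (axis j 1 - axis i 1)) $ k) = (\<Sum>k\<in>UNIV. x $ k)"
    by (simp only: sum_addscale vector_minus_component sum_subtractf sum_axis) simp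
  moreover have "0 \<le> (x + (g * x $ i) *\<^sub>R (axis j 1 - axis i 1)) $ k" for k
  proof -
    have "g * x $ i \<le> x $ i" using g xi by (simp add: mult_left_le_one_le)
    moreover have "0 \<le> g * x $ i" using g xi by simp
    ultimately show ?thesis using simplex_nonneg[OF x, of k] ij
      by (auto simp: axis_def)
  qed
  ultimately show ?thesis using simplex_sum[OF x] by (auto simp: Simplex_def)
qed

lemma shift2_in:
  assumes x: "x \<in> Simplex" and g: "0 \<le> g" "g \<le> 1"
  shows "x - (g * x $ i) *\<^sub>R axis i 1 \<in> Simplex"
proof -
  have xi: "0 \<le> x $ i" using simplex_nonneg[OF x] .
  have "(\<Sum>k\<in>UNIV. (x - (g * x $ i) *\<^sub>R axis i 1) $ k) = (\<Sum>k\<in>UNIV. x $ k) - g * x $ i"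
    by (simp only: sum_subscale sum_axis)
  moreover have "0 \<le> (x - (g * x $ i) *\<^sub>R axis i 1) $ k" for k
  proof -
    have "g * x $ i \<le> x $ i" using g xi by (simp add: mult_left_le_one_le)
    thus ?thesis using simplex_nonneg[OF x, of k] by (auto simp: axis_def)
  qed
  moreover have "(\<Sum>k\<in>UNIV. x $ k) - g * x $ i \<le> 1"
    using simplex_sum[OF x] mult_nonneg_nonneg[OF g(1) xi] by linarith
  ultimately show ?thesis unfolding Simplex_def by simp
qed

lemma shift3_in:
  assumes x: "x \<in> Simplex" and g: "0 \<le> g" "g \<le> 1"
  shows "x + (g * coord0 x) *\<^sub>R axis j 1 \<in> Simplex"
proof -
  have c: "0 \<le> coord0 x" using coord0_nonneg[OF x] .
  have "(\<Sum>k\<in>UNIV. (x + (g * coord0 x) *\<^sub>R axis j 1) $ k) = (\<Sum>k\<in>UNIV. x $ k) + g * coord0 x"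
    by (simp only: sum_addscale sum_axis)
  also have "\<dots> \<le> (\<Sum>k\<in>UNIV. x $ k) + coord0 x"
    using g c by (simp add: mult_left_le_one_le)
  also have "\<dots> = 1" by (simp add: coord0_def)
  finally have "(\<Sum>k\<in>UNIV. (x + (g * coord0 x) *\<^sub>R axis j 1) $ k) \<le> 1" .
  moreover have "0 \<le> (x + (g * coord0 x) *\<^sub>R axis j 1) $ k" for k
    using simplex_nonneg[OF x, of k] g c by (auto simp: axis_def)
  ultimately show ?thesis by (auto simp: Simplex_def)
qed



lemma Jop_diff:
  "Jop lam gam f0 f \<phi>1 y - Jop lam gam f0 f \<phi>2 y = Jop lam gam f0 f (\<lambda>z. \<phi>1 z - \<phi>2 z) y"
proof -
  have aux: "\<And>l c a b d e. (l::real) * c * ((a - d) - (b - e)) = l * c * (a - b) - l * c * (d - e)"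
    by (simp add: algebra_simps)
  show ?thesis unfolding Jop_def aux sum_subtractf by linarith
qed

lemma int_est:
  fixes F :: "real \<Rightarrow> real"
  assumes F: "F integrable_on {0..t}" and t: "0 \<le> t" and b: "0 < \<beta>" and A: "0 \<le> A"
    and le: "\<And>s. s \<in> {0..t} \<Longrightarrow> \<bar>F s\<bar> \<le> A * exp (\<beta> * s)"
  shows "\<bar>integral {0..t} F\<bar> \<le> A / \<beta> * exp (\<beta> * t)"
proof -
  have d: "((\<lambda>s. A / \<beta> * exp (\<beta> * s)) has_vector_derivative A * exp (\<beta> * s)) (at s within {0..t})" for s
    using b by (auto intro!: derivative_eq_intros simp: has_real_derivative_iff_has_vector_derivative[symmetric])
  have gi: "((\<lambda>s. A * exp (\<beta> * s)) has_integral (A / \<beta> * exp (\<beta> * t) - A / \<beta> * exp (\<beta> * 0))) {0..t}"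
    by (rule fundamental_theorem_of_calculus[OF t]) (rule d)
  have "\<bar>integral {0..t} F\<bar> \<le> integral {0..t} (\<lambda>s. A * exp (\<beta> * s))"
    using integral_norm_bound_integral[OF F has_integral_integrable[OF gi]] le by auto
  also have "\<dots> = A / \<beta> * exp (\<beta> * t) - A / \<beta>"
    using integral_unique[OF gi] by simp
  also have "\<dots> \<le> A / \<beta> * exp (\<beta> * t)" using A b by simp
  finally show ?thesis .
qed

lemma image_div_01:
  assumes "0 < (t::real)" shows "(\<lambda>r. r / t) ` {0..t} = {0..1}"
proof
  show "(\<lambda>r. r / t) ` {0..t} \<subseteq> {0..1}" using assms by auto
  show "{0..1} \<subseteq> (\<lambda>r. r / t) ` {0..t}"
  proof
    fix y assume "y \<in> {0..(1::real)}"
    then have "t * y \<in> {0..t}" "y = (t*y)/t" using assms by (auto simp: mult_left_le_one_le)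
    then show "y \<in> (\<lambda>r. r / t) ` {0..t}" by blast
  qed
qed

lemma int_rescale:
  fixes F :: "real \<Rightarrow> real"
  assumes "0 \<le> t"
  shows "integral {0..t} F = t * integral {0..1} (\<lambda>r. F (t * r))"
proof (cases "t = 0")
  case True then show ?thesis by simp
next
  case False
  then have t: "0 < t" using assms by simp
  have "integral ((\<lambda>r. r / t) ` {0..t}) (\<lambda>r. F (t * r)) = (1 / \<bar>t\<bar>) *\<^sub>R integral {0..t} F"
    using integral_stretch_real[of t 0 t F] t by simp
  then show ?thesis using t by (simp add: image_div_01)
qed

lemma int_cont:
  fixes F :: "'a::topological_space \<Rightarrow> real \<Rightarrow> real \<Rightarrow> real"
  assumes c: "continuous_on (A \<times> {0..} \<times> {0..}) (\<lambda>(x,t,s). F x t s)"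
  shows "continuous_on (A \<times> {0..}) (\<lambda>(x,t). integral {0..t} (F x t))"
proof -
  let ?m = "\<lambda>z::('a \<times> real) \<times> real. (fst (fst z), snd (fst z), snd (fst z) * snd z)"
  have m: "continuous_on ((A \<times> {0..}) \<times> cbox 0 1) ?m"
    by (intro continuous_on_Pair continuous_on_fst continuous_on_snd continuous_on_mult continuous_on_id)
  have mi: "?m ` ((A \<times> {0..}) \<times> cbox 0 1) \<subseteq> A \<times> {0..} \<times> {0..}"
    by auto
  have "continuous_on ((A \<times> {0..}) \<times> cbox 0 1) ((\<lambda>(x,t,s). F x t s) \<circ> ?m)"
    by (rule continuous_on_compose[OF m continuous_on_subset[OF c mi]])
  then have g: "continuous_on ((A \<times> {0..}) \<times> cbox 0 1) (\<lambda>(xt, r). F (fst xt) (snd xt) (snd xt * r))"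
    by (simp add: o_def case_prod_beta)
  have i: "continuous_on (A \<times> {0..}) (\<lambda>xt. integral (cbox 0 1) (\<lambda>r. F (fst xt) (snd xt) (snd xt * r)))"
    by (rule integral_continuous_on_param[OF g])
  have "continuous_on (A \<times> {0..}) (\<lambda>xt. snd xt * integral (cbox 0 1) (\<lambda>r. F (fst xt) (snd xt) (snd xt * r)))"
    by (rule continuous_on_mult[OF continuous_on_snd[OF continuous_on_id] i])
  then show ?thesis
  proof (rule continuous_on_eq)
    fix xt assume "xt \<in> A \<times> {0::real..}"
    then have "0 \<le> snd xt" by auto
    then show "snd xt * integral (cbox 0 1) (\<lambda>r. F (fst xt) (snd xt) (snd xt * r)) = (\<lambda>(x,t). integral {0..t} (F x t)) xt"
      by (simp add: case_prod_beta int_rescale[of "snd xt" "F (fst xt) (snd xt)"])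
  qed
qed



locale mild =
  fixes f0 :: "real ^ 'n::finite \<Rightarrow> real"
    and f :: "'n \<Rightarrow> real ^ 'n \<Rightarrow> real"
    and lam gam :: "'n option \<Rightarrow> 'n option \<Rightarrow> real"
    and Y :: "real ^ 'n \<Rightarrow> real \<Rightarrow> real ^ 'n"
  assumes f0_lip: "\<exists>L. L-lipschitz_on Simplex f0"
    and f_lip: "\<And>k. \<exists>L. L-lipschitz_on Simplex (f k)"
    and gam_range: "\<And>i j. i \<noteq> j \<Longrightarrow> 0 < gam i j \<and> gam i j \<le> 1"
    and Y_init: "\<And>x. x \<in> Simplex \<Longrightarrow> Y x 0 = x"
    and Y_in: "\<And>x t. x \<in> Simplex \<Longrightarrow> Y x t \<in> Simplex"
    and Y_ode: "\<And>x t. x \<in> Simplex \<Longrightarrow>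
                  (Y x has_vector_derivative drift f0 f (Y x t)) (at t)"
begin

lemma f0_cont: "continuous_on Simplex f0"
  using f0_lip by (metis lipschitz_on_continuous_on)
lemma f_cont: "continuous_on Simplex (f i)"
  using f_lip by (metis lipschitz_on_continuous_on)

lemma bnd_exists: "\<exists>B. 0 \<le> B \<and> (\<forall>x\<in>Simplex. \<bar>f0 x\<bar> \<le> B \<and> (\<forall>i. \<bar>f i x\<bar> \<le> B))"
proof -
  have "bounded (f0 ` Simplex)"
    by (rule compact_imp_bounded[OF compact_continuous_image[OF f0_cont simplex_compact]])
  then obtain B0 where B0: "\<And>x. x \<in> Simplex \<Longrightarrow> \<bar>f0 x\<bar> \<le> B0" by (auto simp: bounded_iff)
  have "\<forall>i. \<exists>B. \<forall>x\<in>Simplex. \<bar>f i x\<bar> \<le> B"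
  proof
    fix i
    have "bounded (f i ` Simplex)"
      by (rule compact_imp_bounded[OF compact_continuous_image[OF f_cont simplex_compact]])
    then show "\<exists>B. \<forall>x\<in>Simplex. \<bar>f i x\<bar> \<le> B" by (auto simp: bounded_iff)
  qed
  then obtain Bf where Bf: "\<And>i x. x \<in> Simplex \<Longrightarrow> \<bar>f i x\<bar> \<le> Bf i" by metis
  define B where "B = \<bar>B0\<bar> + (\<Sum>i\<in>UNIV. \<bar>Bf i\<bar>)"
  have "\<bar>f i x\<bar> \<le> B" if "x \<in> Simplex" for i x
  proof -
    have "\<bar>Bf i\<bar> \<le> (\<Sum>i\<in>UNIV. \<bar>Bf i\<bar>)" by (rule member_le_sum) auto
    then show ?thesis using Bf[OF that, of i] by (simp add: B_def)
  qed
  moreover have "\<bar>f0 x\<bar> \<le> B" if "x \<in> Simplex" for x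
    using B0[OF that] abs_ge_self[of B0] sum_nonneg[of UNIV "\<lambda>i. \<bar>Bf i\<bar>"] unfolding B_def by linarith
  moreover have "0 \<le> B" by (simp add: B_def sum_nonneg)
  ultimately show ?thesis by blast
qed

definition Fb where "Fb = (SOME B. 0 \<le> B \<and> (\<forall>x\<in>Simplex. \<bar>f0 x\<bar> \<le> B \<and> (\<forall>i. \<bar>f i x\<bar> \<le> B)))"

lemma Fb: "0 \<le> Fb" "x \<in> Simplex \<Longrightarrow> \<bar>f0 x\<bar> \<le> Fb" "x \<in> Simplex \<Longrightarrow> \<bar>f i x\<bar> \<le> Fb"
  using someI_ex[OF bnd_exists] unfolding Fb_def[symmetric] by auto

definition Kc where "Kc = 2 * Fb * ((\<Sum>i\<in>UNIV. \<Sum>j\<in>UNIV - {i}. \<bar>lam (Some i) (Some j)\<bar>)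
   + (\<Sum>i\<in>UNIV. \<bar>lam (Some i) None\<bar>) + (\<Sum>j\<in>UNIV. \<bar>lam None (Some j)\<bar>))"

lemma Kc_nonneg: "0 \<le> Kc"
  unfolding Kc_def using Fb(1) by (intro mult_nonneg_nonneg add_nonneg_nonneg sum_nonneg) auto

lemma term_bnd:
  assumes "\<bar>c\<bar> \<le> Fb" "\<bar>a\<bar> \<le> M" "\<bar>b\<bar> \<le> M"
  shows "\<bar>(l::real) * c * (a - b)\<bar> \<le> 2 * Fb * \<bar>l\<bar> * M"
proof -
  have "\<bar>l * c * (a - b)\<bar> = \<bar>l\<bar> * \<bar>c\<bar> * \<bar>a - b\<bar>" by (simp add: abs_mult)
  also have "\<dots> \<le> \<bar>l\<bar> * Fb * (2 * M)"
    using assms by (intro mult_mono) auto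
  finally show ?thesis by (simp add: algebra_simps)
qed

lemma Jop_bound:
  assumes y: "y \<in> Simplex" and M: "\<And>z. z \<in> Simplex \<Longrightarrow> \<bar>\<phi> z\<bar> \<le> M"
  shows "\<bar>Jop lam gam f0 f \<phi> y\<bar> \<le> Kc * M"
proof -
  have g1: "0 \<le> gam (Some i) (Some j) \<and> gam (Some i) (Some j) \<le> 1" if "i \<noteq> j" for i j
    using gam_range[of "Some i" "Some j"] that by auto
  have g2: "0 \<le> gam (Some i) None \<and> gam (Some i) None \<le> 1" for i
    using gam_range[of "Some i" None] by auto
  have g3: "0 \<le> gam None (Some j) \<and> gam None (Some j) \<le> 1" for j
    using gam_range[of None "Some j"] by auto
  have My: "\<bar>\<phi> y\<bar> \<le> M" using M[OF y] .
  have T1: "\<bar>\<Sum>i\<in>UNIV. \<Sum>j\<in>UNIV - {i}. lam (Some i) (Some j) * f i y *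
        (\<phi> (y + (gam (Some i) (Some j) * y $ i) *\<^sub>R (axis j 1 - axis i 1)) - \<phi> y)\<bar>
     \<le> (\<Sum>i\<in>UNIV. \<Sum>j\<in>UNIV - {i}. 2 * Fb * \<bar>lam (Some i) (Some j)\<bar> * M)"
    apply (rule order_trans[OF sum_abs], rule sum_mono, rule order_trans[OF sum_abs], rule sum_mono)
    using g1 by (auto intro!: term_bnd Fb y My M shift1_in)
  have T2: "\<bar>\<Sum>i\<in>UNIV. lam (Some i) None * f i y *
        (\<phi> (y - (gam (Some i) None * y $ i) *\<^sub>R axis i 1) - \<phi> y)\<bar>
     \<le> (\<Sum>i\<in>UNIV. 2 * Fb * \<bar>lam (Some i) None\<bar> * M)"
    apply (rule order_trans[OF sum_abs], rule sum_mono)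
    using g2 by (auto intro!: term_bnd Fb y My M shift2_in)
  have T3: "\<bar>\<Sum>j\<in>UNIV. lam None (Some j) * f0 y *
        (\<phi> (y + (gam None (Some j) * coord0 y) *\<^sub>R axis j 1) - \<phi> y)\<bar>
     \<le> (\<Sum>j\<in>UNIV. 2 * Fb * \<bar>lam None (Some j)\<bar> * M)"
    apply (rule order_trans[OF sum_abs], rule sum_mono)
    using g3 by (auto intro!: term_bnd Fb y My M shift3_in)
  have "\<bar>Jop lam gam f0 f \<phi> y\<bar> \<le> (\<Sum>i\<in>UNIV. \<Sum>j\<in>UNIV - {i}. 2 * Fb * \<bar>lam (Some i) (Some j)\<bar> * M)
     + (\<Sum>i\<in>UNIV. 2 * Fb * \<bar>lam (Some i) None\<bar> * M) + (\<Sum>j\<in>UNIV. 2 * Fb * \<bar>lam None (Some j)\<bar> * M)"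
    unfolding Jop_def using T1 T2 T3 by linarith
  also have "\<dots> = Kc * M"
    unfolding Kc_def by (simp add: sum_distrib_left sum_distrib_right algebra_simps)
  finally show ?thesis .
qed

lemma Jop_cont:
  assumes h: "continuous_on (Simplex \<times> {0..}) h"
    and p: "continuous_on D p" "\<And>z. z \<in> D \<Longrightarrow> p z \<in> Simplex"
    and q: "continuous_on D q" "\<And>z. z \<in> D \<Longrightarrow> 0 \<le> q z"
  shows "continuous_on D (\<lambda>z. Jop lam gam f0 f (\<lambda>y. h (y, q z)) (p z))"
proof -
  have H: "continuous_on D (\<lambda>z. h (a z, q z))"
    if a: "continuous_on D a" "\<And>z. z \<in> D \<Longrightarrow> a z \<in> Simplex" for a
  proof (rule continuous_on_compose2[OF h])
    show "continuous_on D (\<lambda>z. (a z, q z))" by (intro continuous_on_Pair a q)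
    show "(\<lambda>z. (a z, q z)) ` D \<subseteq> Simplex \<times> {0..}" using a(2) q(2) by auto
  qed
  have F: "continuous_on D (\<lambda>z. f i (p z))" for i
    by (rule continuous_on_compose2[OF f_cont p(1)]) (use p(2) in auto)
  have F0: "continuous_on D (\<lambda>z. f0 (p z))"
    by (rule continuous_on_compose2[OF f0_cont p(1)]) (use p(2) in auto)
  have g1: "0 \<le> gam (Some i) (Some j) \<and> gam (Some i) (Some j) \<le> 1" if "i \<noteq> j" for i j
    using gam_range[of "Some i" "Some j"] that by auto
  have g2: "0 \<le> gam (Some i) None \<and> gam (Some i) None \<le> 1" for i
    using gam_range[of "Some i" None] by auto
  have g3: "0 \<le> gam None (Some j) \<and> gam None (Some j) \<le> 1" for j
    using gam_range[of None "Some j"] by auto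
  have cc: "continuous_on D (\<lambda>z. coord0 (p z))"
    unfolding coord0_def by (intro continuous_intros p)
  have c1: "continuous_on D (\<lambda>z. lam (Some i) (Some j) * f i (p z) *
        (h (p z + (gam (Some i) (Some j) * p z $ i) *\<^sub>R (axis j 1 - axis i 1), q z) - h (p z, q z)))"
    if "i \<noteq> j" for i j
    by (intro continuous_on_mult continuous_on_diff continuous_on_const F H p
        continuous_on_add continuous_on_scaleR continuous_on_component)
       (use p(2) g1[OF that] that in \<open>auto intro: shift1_in\<close>)
  have c2: "continuous_on D (\<lambda>z. lam (Some i) None * f i (p z) *
        (h (p z - (gam (Some i) None * p z $ i) *\<^sub>R axis i 1, q z) - h (p z, q z)))" for i
    by (intro continuous_on_mult continuous_on_diff continuous_on_const F H p
        continuous_on_scaleR continuous_on_component)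
       (use p(2) g2 in \<open>auto intro: shift2_in\<close>)
  have c3: "continuous_on D (\<lambda>z. lam None (Some j) * f0 (p z) *
        (h (p z + (gam None (Some j) * coord0 (p z)) *\<^sub>R axis j 1, q z) - h (p z, q z)))" for j
    by (intro continuous_on_mult continuous_on_diff continuous_on_const F0 H p cc
        continuous_on_add continuous_on_scaleR)
       (use p(2) g3 in \<open>auto intro: shift3_in\<close>)
  show ?thesis
    unfolding Jop_def
    by (intro continuous_on_add continuous_on_sum c1 c2 c3) auto
qed

lemma Y_cont_t: assumes x: "x \<in> Simplex" shows "continuous_on UNIV (Y x)"
  by (intro continuous_at_imp_continuous_on ballI has_vector_derivative_continuous) (rule Y_ode[OF x])

end



definition BL :: "(real ^ 'n::finite \<Rightarrow> real) \<Rightarrow> bool" where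
  "BL p \<longleftrightarrow> (\<exists>B L. 0 \<le> B \<and> 0 \<le> L \<and> (\<forall>x\<in>Simplex. \<bar>p x\<bar> \<le> B \<and> (\<forall>y\<in>Simplex. \<bar>p x - p y\<bar> \<le> L * norm (x - y))))"

lemma BL_const: "BL (\<lambda>x. c)"
  unfolding BL_def by (rule exI[of _ "\<bar>c\<bar>"], rule exI[of _ 0]) auto

lemma BL_comp: "BL (\<lambda>x::real^'n::finite. x $ k)"
  unfolding BL_def
proof (rule exI[of _ 1], rule exI[of _ 1], intro conjI ballI)
  fix x y :: "real^'n" assume x: "x \<in> Simplex" and "y \<in> Simplex"
  show "\<bar>x $ k\<bar> \<le> 1" using simplex_nonneg[OF x] simplex_le1[OF x] by simp
  show "\<bar>x $ k - y $ k\<bar> \<le> 1 * norm (x - y)"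
    using component_le_norm_cart[of "x - y" k] by simp
qed auto

lemma BL_add: fixes p q :: "real^'n::finite \<Rightarrow> real" assumes "BL p" "BL q" shows "BL (\<lambda>x. p x + q x)"
proof -
  obtain B1 L1 where 1: "0 \<le> B1" "0 \<le> L1" "\<forall>x\<in>Simplex. \<bar>p x\<bar> \<le> B1 \<and> (\<forall>y\<in>Simplex. \<bar>p x - p y\<bar> \<le> L1 * norm (x - y))"
    using assms(1) unfolding BL_def by blast
  obtain B2 L2 where 2: "0 \<le> B2" "0 \<le> L2" "\<forall>x\<in>Simplex. \<bar>q x\<bar> \<le> B2 \<and> (\<forall>y\<in>Simplex. \<bar>q x - q y\<bar> \<le> L2 * norm (x - y))"
    using assms(2) unfolding BL_def by blast
  show ?thesis unfolding BL_def
  proof (rule exI[of _ "B1 + B2"], rule exI[of _ "L1 + L2"], intro conjI ballI)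
    fix x y :: "real^'n" assume x: "x \<in> Simplex" and y: "y \<in> Simplex"
    show "\<bar>p x + q x\<bar> \<le> B1 + B2" using 1(3) 2(3) x by (smt (verit))
    have "\<bar>p x - p y\<bar> \<le> L1 * norm (x - y)" "\<bar>q x - q y\<bar> \<le> L2 * norm (x - y)"
      using 1(3) 2(3) x y by auto
    moreover have e: "p x + q x - (p y + q y) = (p x - p y) + (q x - q y)" by simp
    ultimately show "\<bar>p x + q x - (p y + q y)\<bar> \<le> (L1 + L2) * norm (x - y)"
      unfolding e using abs_triangle_ineq[of "p x - p y" "q x - q y"] distrib_right[of L1 L2 "norm (x-y)"]
      by linarith
  qed (use 1 2 in auto)
qed

lemma BL_neg: assumes "BL p" shows "BL (\<lambda>x. - p x)"
  using assms unfolding BL_def by (metis abs_minus_cancel minus_diff_eq abs_minus_commute minus_diff_minus)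

lemma BL_diff: assumes "BL p" "BL q" shows "BL (\<lambda>x. p x - q x)"
  using BL_add[OF assms(1) BL_neg[OF assms(2)]] by simp

lemma BL_mult: fixes p q :: "real^'n::finite \<Rightarrow> real" assumes "BL p" "BL q" shows "BL (\<lambda>x. p x * q x)"
proof -
  obtain B1 L1 where 1: "0 \<le> B1" "0 \<le> L1" "\<forall>x\<in>Simplex. \<bar>p x\<bar> \<le> B1 \<and> (\<forall>y\<in>Simplex. \<bar>p x - p y\<bar> \<le> L1 * norm (x - y))"
    using assms(1) unfolding BL_def by blast
  obtain B2 L2 where 2: "0 \<le> B2" "0 \<le> L2" "\<forall>x\<in>Simplex. \<bar>q x\<bar> \<le> B2 \<and> (\<forall>y\<in>Simplex. \<bar>q x - q y\<bar> \<le> L2 * norm (x - y))"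
    using assms(2) unfolding BL_def by blast
  show ?thesis unfolding BL_def
  proof (rule exI[of _ "B1 * B2"], rule exI[of _ "B1 * L2 + B2 * L1"], intro conjI ballI)
    fix x y :: "real^'n" assume x: "x \<in> Simplex" and y: "y \<in> Simplex"
    have px: "\<bar>p x\<bar> \<le> B1" and qx: "\<bar>q x\<bar> \<le> B2" and qy: "\<bar>q y\<bar> \<le> B2"
      and dp: "\<bar>p x - p y\<bar> \<le> L1 * norm (x - y)" and dq: "\<bar>q x - q y\<bar> \<le> L2 * norm (x - y)"
      using 1(3) 2(3) x y by auto
    show "\<bar>p x * q x\<bar> \<le> B1 * B2" using px qx by (simp add: abs_mult mult_mono')
    have "p x * q x - p y * q y = p x * (q x - q y) + (p x - p y) * q y" by (simp add: algebra_simps)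
    then have "\<bar>p x * q x - p y * q y\<bar> \<le> \<bar>p x\<bar> * \<bar>q x - q y\<bar> + \<bar>p x - p y\<bar> * \<bar>q y\<bar>"
      by (metis abs_mult abs_triangle_ineq)
    also have "\<dots> \<le> B1 * (L2 * norm (x - y)) + (L1 * norm (x - y)) * B2"
      using px qy dp dq 1 2 by (intro add_mono mult_mono) auto
    finally show "\<bar>p x * q x - p y * q y\<bar> \<le> (B1 * L2 + B2 * L1) * norm (x - y)"
      by (simp add: algebra_simps)
  qed (use 1 2 in auto)
qed

lemma BL_sum: "finite A \<Longrightarrow> (\<And>i. i \<in> A \<Longrightarrow> BL (p i)) \<Longrightarrow> BL (\<lambda>x. \<Sum>i\<in>A. p i x)"
proof (induction A rule: finite_induct)
  case empty then show ?case using BL_const[of 0] by simp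
next
  case (insert a A) then show ?case using BL_add[of "p a" "\<lambda>x. \<Sum>i\<in>A. p i x"] by simp
qed

lemma BL_lip: fixes p :: "real^'n::finite \<Rightarrow> real" assumes "L-lipschitz_on Simplex p" shows "BL p"
proof -
  have c: "continuous_on Simplex p" using lipschitz_on_continuous_on[OF assms] .
  have "bounded (p ` Simplex)"
    by (rule compact_imp_bounded[OF compact_continuous_image[OF c simplex_compact]])
  then obtain B where B: "\<And>x. x \<in> Simplex \<Longrightarrow> \<bar>p x\<bar> \<le> B" by (auto simp: bounded_iff)
  have L: "0 \<le> L" using lipschitz_on_nonneg[OF assms] .
  show ?thesis unfolding BL_def
  proof (rule exI[of _ "\<bar>B\<bar>"], rule exI[of _ L], intro conjI ballI)
    fix x y :: "real^'n" assume "x \<in> Simplex" "y \<in> Simplex"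
    then show "\<bar>p x\<bar> \<le> \<bar>B\<bar>" "\<bar>p x - p y\<bar> \<le> L * norm (x - y)"
      using B lipschitz_onD[OF assms] by (force simp: dist_norm)+
  qed (use L in auto)
qed

context mild begin

lemma drift_comp_BL: "BL (\<lambda>x. drift f0 f x $ k)"
proof -
  have f0: "BL f0" using f0_lip BL_lip by blast
  have fk: "BL (f i)" for i using f_lip BL_lip by blast
  have c0: "BL coord0" unfolding coord0_def
    by (intro BL_diff BL_const BL_sum BL_comp) auto
  have fb: "BL (fbar f0 f)" unfolding fbar_def
    by (intro BL_add BL_mult BL_sum BL_comp fk f0 c0) auto
  have "BL (\<lambda>x. - (f k x - fbar f0 f x) * x $ k)"
    by (intro BL_mult BL_neg BL_diff fk fb BL_comp)
  then show ?thesis by (simp add: drift_def)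
qed

lemma drift_lip: "\<exists>L. 0 \<le> L \<and> (\<forall>x\<in>Simplex. \<forall>y\<in>Simplex. norm (drift f0 f x - drift f0 f y) \<le> L * norm (x - y))"
proof -
  have "\<forall>k. \<exists>L. 0 \<le> L \<and> (\<forall>x\<in>Simplex. \<forall>y\<in>Simplex. \<bar>drift f0 f x $ k - drift f0 f y $ k\<bar> \<le> L * norm (x - y))"
    using drift_comp_BL unfolding BL_def by metis
  then obtain Lk where Lk: "\<And>k. 0 \<le> Lk k"
    "\<And>k x y. x \<in> Simplex \<Longrightarrow> y \<in> Simplex \<Longrightarrow> \<bar>drift f0 f x $ k - drift f0 f y $ k\<bar> \<le> Lk k * norm (x - y)"
    by metis
  show ?thesis
  proof (rule exI[of _ "\<Sum>k\<in>UNIV. Lk k"], intro conjI ballI)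
    show "0 \<le> (\<Sum>k\<in>UNIV. Lk k)" using Lk(1) by (simp add: sum_nonneg)
    fix x y :: "real^'n" assume x: "x \<in> Simplex" and y: "y \<in> Simplex"
    have "norm (drift f0 f x - drift f0 f y) \<le> (\<Sum>k\<in>UNIV. \<bar>(drift f0 f x - drift f0 f y) $ k\<bar>)"
      by (rule norm_le_l1_cart)
    also have "\<dots> \<le> (\<Sum>k\<in>UNIV. Lk k * norm (x - y))"
      using Lk(2)[OF x y] by (intro sum_mono) simp
    also have "\<dots> = (\<Sum>k\<in>UNIV. Lk k) * norm (x - y)" by (simp add: sum_distrib_right)
    finally show "norm (drift f0 f x - drift f0 f y) \<le> (\<Sum>k\<in>UNIV. Lk k) * norm (x - y)" .
  qed
qed

end


context mild begin

definition Ld where "Ld = (SOME L. 0 \<le> L \<and> (\<forall>x\<in>Simplex. \<forall>y\<in>Simplex. norm (drift f0 f x - drift f0 f y) \<le> L * norm (x - y)))"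

lemma Ld: "0 \<le> Ld" "x \<in> Simplex \<Longrightarrow> y \<in> Simplex \<Longrightarrow> norm (drift f0 f x - drift f0 f y) \<le> Ld * norm (x - y)"
  using someI_ex[OF drift_lip] unfolding Ld_def[symmetric] by auto

lemma gronwall:
  assumes x: "x \<in> Simplex" and y: "y \<in> Simplex"
  shows "norm (Y x t - Y y t) \<le> exp (Ld * \<bar>t\<bar>) * norm (x - y)"
proof -
  define d where "d = (\<lambda>t. Y x t - Y y t)"
  define d' where "d' = (\<lambda>t. drift f0 f (Y x t) - drift f0 f (Y y t))"
  define g where "g = (\<lambda>t. d t \<bullet> d t)"
  have dd: "(d has_vector_derivative d' s) (at s)" for s
    unfolding d_def d'_def by (intro has_vector_derivative_diff Y_ode x y)
  have gd: "(g has_real_derivative 2 * (d s \<bullet> d' s)) (at s)" for s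
  proof -
    have "(d has_derivative (\<lambda>h. h *\<^sub>R d' s)) (at s)" using dd[of s] by (simp add: has_vector_derivative_def)
    from has_derivative_inner[OF this this]
    have "(g has_derivative (\<lambda>h. d s \<bullet> (h *\<^sub>R d' s) + (h *\<^sub>R d' s) \<bullet> d s)) (at s)" unfolding g_def .
    moreover have "(\<lambda>h. d s \<bullet> (h *\<^sub>R d' s) + (h *\<^sub>R d' s) \<bullet> d s) = (\<lambda>h. (2 * (d s \<bullet> d' s)) * h)"
      by (auto simp: fun_eq_iff inner_commute algebra_simps)
    ultimately show ?thesis unfolding has_field_derivative_def by simp
  qed
  have gb: "2 * (d s \<bullet> d' s) \<le> 2 * Ld * g s" "- (2 * (d s \<bullet> d' s)) \<le> 2 * Ld * g s" for s
  proof -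
    have "\<bar>d s \<bullet> d' s\<bar> \<le> norm (d s) * norm (d' s)" by (rule Cauchy_Schwarz_ineq2)
    also have "\<dots> \<le> norm (d s) * (Ld * norm (d s))"
      unfolding d'_def d_def by (intro mult_left_mono Ld(2) Y_in x y) auto
    also have "\<dots> = Ld * g s" by (simp add: g_def power2_norm_eq_inner[symmetric] power2_eq_square)
    finally have "\<bar>d s \<bullet> d' s\<bar> \<le> Ld * g s" .
    then show "2 * (d s \<bullet> d' s) \<le> 2 * Ld * g s" "- (2 * (d s \<bullet> d' s)) \<le> 2 * Ld * g s" by linarith+
  qed
  have g0: "g 0 = norm (x - y) ^ 2" by (simp add: g_def d_def Y_init x y power2_norm_eq_inner)
  have e: "((\<lambda>s. exp (c * s)) has_real_derivative exp (c * s) * c) (at s)" for c s :: real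
    by (auto intro!: derivative_eq_intros)
  have "g t \<le> exp (2 * Ld * \<bar>t\<bar>) * g 0"
  proof (cases "0 \<le> t")
    case True
    let ?\<phi> = "\<lambda>s. exp (- (2 * Ld) * s) * g s"
    have "?\<phi> t \<le> ?\<phi> 0"
    proof (rule DERIV_nonpos_imp_nonincreasing[OF True])
      fix s
      have "(?\<phi> has_real_derivative exp (- (2 * Ld) * s) * (2 * (d s \<bullet> d' s)) + exp (- (2 * Ld) * s) * (- (2 * Ld)) * g s) (at s)"
        by (rule DERIV_mult'[OF e[of "- (2 * Ld)" s] gd[of s]])
      moreover have "exp (- (2 * Ld) * s) * (2 * (d s \<bullet> d' s)) + exp (- (2 * Ld) * s) * (- (2 * Ld)) * g s \<le> 0"
      proof -
        have "exp (- (2 * Ld) * s) * (2 * (d s \<bullet> d' s)) + exp (- (2 * Ld) * s) * (- (2 * Ld)) * g s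
          = exp (- (2 * Ld) * s) * (2 * (d s \<bullet> d' s) - 2 * Ld * g s)" by (simp add: algebra_simps)
        also have "\<dots> \<le> 0"
        proof -
          have "2 * (d s \<bullet> d' s) - 2 * Ld * g s \<le> 0" using gb(1)[of s] by linarith
          then show ?thesis by (rule mult_nonneg_nonpos[OF exp_ge_zero])
        qed
        finally show ?thesis .
      qed
      ultimately show "\<exists>y. (?\<phi> has_real_derivative y) (at s) \<and> y \<le> 0" by blast
    qed
    then have p: "exp (- (2 * Ld) * t) * g t \<le> g 0" by simp
    have ee: "exp (2 * Ld * t) * exp (- (2 * Ld) * t) = 1"
      unfolding exp_add[symmetric] by simp
    have "g t = exp (2 * Ld * t) * (exp (- (2 * Ld) * t) * g t)"
      unfolding mult.assoc[symmetric] ee by simp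
    also have "\<dots> \<le> exp (2 * Ld * t) * g 0" using p by (intro mult_left_mono) auto
    finally show ?thesis using True by (simp add: abs_of_nonneg)
  next
    case False
    then have t: "t \<le> 0" by simp
    let ?\<phi> = "\<lambda>s. exp ((2 * Ld) * s) * g s"
    have "?\<phi> t \<le> ?\<phi> 0"
    proof (rule DERIV_nonneg_imp_nondecreasing[OF t])
      fix s
      have "(?\<phi> has_real_derivative exp ((2 * Ld) * s) * (2 * (d s \<bullet> d' s)) + exp ((2 * Ld) * s) * (2 * Ld) * g s) (at s)"
        by (rule DERIV_mult'[OF e[of "2 * Ld" s] gd[of s]])
      moreover have "0 \<le> exp ((2 * Ld) * s) * (2 * (d s \<bullet> d' s)) + exp ((2 * Ld) * s) * (2 * Ld) * g s"
      proof -
        have "exp ((2 * Ld) * s) * (2 * (d s \<bullet> d' s)) + exp ((2 * Ld) * s) * (2 * Ld) * g s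
          = exp ((2 * Ld) * s) * (2 * Ld * g s + 2 * (d s \<bullet> d' s))" by (simp add: algebra_simps)
        also have "0 \<le> \<dots>"
        proof -
          have "0 \<le> 2 * Ld * g s + 2 * (d s \<bullet> d' s)" using gb(2)[of s] by linarith
          then show ?thesis by (rule mult_nonneg_nonneg[OF exp_ge_zero])
        qed
        finally show ?thesis .
      qed
      ultimately show "\<exists>y. (?\<phi> has_real_derivative y) (at s) \<and> 0 \<le> y" by blast
    qed
    then have p: "exp (2 * Ld * t) * g t \<le> g 0" by simp
    have ee: "exp (- (2 * Ld) * t) * exp (2 * Ld * t) = 1"
      unfolding exp_add[symmetric] by simp
    have "g t = exp (- (2 * Ld) * t) * (exp (2 * Ld * t) * g t)"
      unfolding mult.assoc[symmetric] ee by simp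
    also have "\<dots> \<le> exp (- (2 * Ld) * t) * g 0" using p by (intro mult_left_mono) auto
    finally have q: "g t \<le> exp (- (2 * Ld) * t) * g 0" .
    have r: "- (2 * Ld) * t = 2 * Ld * \<bar>t\<bar>" using t by (simp add: abs_of_nonpos)
    show ?thesis using q unfolding r .
  qed
  also have "exp (2 * Ld * \<bar>t\<bar>) = (exp (Ld * \<bar>t\<bar>))^2"
    by (simp add: power2_eq_square exp_add[symmetric])
  finally have gt: "g t \<le> (exp (Ld * \<bar>t\<bar>))^2 * norm (x - y)^2" unfolding g0 .
  have n1: "(norm (d t))^2 = g t" unfolding g_def by (rule power2_norm_eq_inner)
  have n2: "(exp (Ld * \<bar>t\<bar>) * norm (x - y))^2 = (exp (Ld * \<bar>t\<bar>))^2 * norm (x - y)^2"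
    by (rule power_mult_distrib)
  have "(norm (d t))^2 \<le> (exp (Ld * \<bar>t\<bar>) * norm (x - y))^2"
    unfolding n1 n2 by (rule gt)
  then have "norm (d t) \<le> exp (Ld * \<bar>t\<bar>) * norm (x - y)"
    by (rule power2_le_imp_le) simp
  then show ?thesis by (simp add: d_def)
qed

lemma Y_lip:
  assumes s: "\<bar>s\<bar> \<le> c"
  shows "(exp (Ld * c))-lipschitz_on Simplex (\<lambda>x. Y x s)"
proof (rule lipschitz_onI)
  fix a b :: "real^'n" assume a: "a \<in> Simplex" and b: "b \<in> Simplex"
  have "dist (Y a s) (Y b s) \<le> exp (Ld * \<bar>s\<bar>) * dist a b"
    using gronwall[OF a b, of s] by (simp add: dist_norm)
  also have "\<dots> \<le> exp (Ld * c) * dist a b"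
    using mult_left_mono[OF s Ld(1)] by (intro mult_right_mono) auto
  finally show "dist (Y a s) (Y b s) \<le> exp (Ld * c) * dist a b" .
qed simp

lemma Y_cont: "continuous_on (Simplex \<times> UNIV) (\<lambda>(x, t). Y x t)"
proof -
  have ll: "local_lipschitz UNIV Simplex (\<lambda>t x. Y x t)"
  proof (rule local_lipschitzI)
    fix t :: real and x :: "real^'n" assume "x \<in> Simplex"
    show "\<exists>u>0. \<exists>L. \<forall>s\<in>cball t u \<inter> UNIV. L-lipschitz_on (cball x u \<inter> Simplex) (\<lambda>x. Y x s)"
      by (intro exI[of _ 1] exI[of _ "exp (Ld * (\<bar>t\<bar> + 1))"] conjI ballI lipschitz_on_subset[OF Y_lip])
         (auto simp: dist_real_def)
  qed
  have c: "continuous_on (UNIV \<times> Simplex) (\<lambda>(t, x). Y x t)"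
    by (rule continuous_on_TimesI[OF ll]) (rule Y_cont_t)
  have "continuous_on (Simplex \<times> UNIV) ((\<lambda>(t, x). Y x t) \<circ> (\<lambda>z. (snd z, fst z)))"
    by (rule continuous_on_compose[OF _ continuous_on_subset[OF c]])
       (auto intro!: continuous_on_Pair continuous_on_fst continuous_on_snd continuous_on_id)
  then show ?thesis by (simp add: o_def case_prod_beta)
qed

end


context mild begin

lemma Yshift_cont: assumes x: "x \<in> Simplex" shows "continuous_on D (\<lambda>s. Y x (s - t))"
  by (rule continuous_on_compose2[OF Y_cont_t[OF x]]) (auto intro!: continuous_intros)

lemma Jint_cont:
  assumes h: "continuous_on (Simplex \<times> {0..}) h" and x: "x \<in> Simplex"
  shows "continuous_on {0..t} (\<lambda>s. Jop lam gam f0 f (\<lambda>y. h (y, s)) (Y x (s - t)))"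
  by (rule Jop_cont[OF h Yshift_cont[OF x], where q="\<lambda>s. s"]) (auto intro: Y_in[OF x] continuous_on_id)

lemma Jint_int:
  assumes h: "continuous_on (Simplex \<times> {0..}) h" and x: "x \<in> Simplex"
  shows "(\<lambda>s. Jop lam gam f0 f (\<lambda>y. h (y, s)) (Y x (s - t))) integrable_on {0..t}"
  by (rule integrable_continuous_interval[OF Jint_cont[OF h x]])

definition "\<beta> = 2 * Kc + 1"

lemma beta_pos: "0 < \<beta>" using Kc_nonneg by (simp add: \<beta>_def)

lemma beta_half: assumes "0 \<le> c" shows "Kc * c / \<beta> \<le> c / 2"
proof -
  have "2 * (Kc * c) \<le> \<beta> * c" using assms by (simp add: \<beta>_def algebra_simps)
  then show ?thesis using beta_pos by (simp add: field_simps)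
qed

lemma uniq:
  assumes u: "global_mild_solution lam gam f0 f Y u" and v: "global_mild_solution lam gam f0 f Y v"
    and x: "x \<in> Simplex" and t: "0 \<le> t"
  shows "v (x, t) = u (x, t)"
  unfolding vec_eq_iff
proof
  fix k
  have cu: "continuous_on (Simplex \<times> {0..}) u" and eu: "\<And>x t. x \<in> Simplex \<Longrightarrow> 0 \<le> t \<Longrightarrow>
      u (x, t) $ k = Y x (- t) $ k + integral {0..t} (\<lambda>s. Jop lam gam f0 f (\<lambda>y. u (y, s) $ k) (Y x (s - t)))"
    using u unfolding global_mild_solution_def by auto
  have cv: "continuous_on (Simplex \<times> {0..}) v" and ev: "\<And>x t. x \<in> Simplex \<Longrightarrow> 0 \<le> t \<Longrightarrow>
      v (x, t) $ k = Y x (- t) $ k + integral {0..t} (\<lambda>s. Jop lam gam f0 f (\<lambda>y. v (y, s) $ k) (Y x (s - t)))"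
    using v unfolding global_mild_solution_def by auto
  have cuk: "continuous_on (Simplex \<times> {0..}) (\<lambda>z. u z $ k)" by (intro continuous_on_component cu)
  have cvk: "continuous_on (Simplex \<times> {0..}) (\<lambda>z. v z $ k)" by (intro continuous_on_component cv)
  define w where "w = (\<lambda>z. v z $ k - u z $ k)"
  have cw: "continuous_on (Simplex \<times> {0..}) w" unfolding w_def by (intro continuous_on_diff cuk cvk)
  have wint: "w (y, s) = integral {0..s} (\<lambda>r. Jop lam gam f0 f (\<lambda>z. w (z, r)) (Y y (r - s)))"
    if y: "y \<in> Simplex" and s: "0 \<le> s" for y s
  proof -
    have "w (y, s) = integral {0..s} (\<lambda>r. Jop lam gam f0 f (\<lambda>z. v (z, r) $ k) (Y y (r - s)))
        - integral {0..s} (\<lambda>r. Jop lam gam f0 f (\<lambda>z. u (z, r) $ k) (Y y (r - s)))"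
      unfolding w_def using eu[OF y s] ev[OF y s] by simp
    also have "\<dots> = integral {0..s} (\<lambda>r. Jop lam gam f0 f (\<lambda>z. v (z, r) $ k) (Y y (r - s))
        - Jop lam gam f0 f (\<lambda>z. u (z, r) $ k) (Y y (r - s)))"
      by (rule integral_diff[symmetric]) (rule Jint_int[OF cvk y], rule Jint_int[OF cuk y])
    also have "\<dots> = integral {0..s} (\<lambda>r. Jop lam gam f0 f (\<lambda>z. w (z, r)) (Y y (r - s)))"
      unfolding Jop_diff w_def ..
    finally show ?thesis .
  qed
  have "compact (w ` (Simplex \<times> {0..t}))"
    by (rule compact_continuous_image[OF continuous_on_subset[OF cw] compact_Times[OF simplex_compact compact_Icc]]) auto
  then obtain M where M: "\<And>z. z \<in> Simplex \<times> {0..t} \<Longrightarrow> \<bar>w z\<bar> \<le> M"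
    using compact_imp_bounded by (fastforce simp: bounded_iff)
  have M0: "0 \<le> M" using M[of "(x, t)"] x t by fastforce
  have claim: "\<forall>y\<in>Simplex. \<forall>s\<in>{0..t}. \<bar>w (y, s)\<bar> \<le> M / 2 ^ n * exp (\<beta> * s)" for n
  proof (induction n)
    case 0
    show ?case
    proof (intro ballI)
      fix y :: "real^'n" and s assume y: "y \<in> Simplex" and s: "s \<in> {0..t}"
      have "1 \<le> exp (\<beta> * s)" using s beta_pos by simp
      then have "M \<le> M * exp (\<beta> * s)" using M0 by (metis mult_left_mono mult.right_neutral)
      then show "\<bar>w (y, s)\<bar> \<le> M / 2 ^ 0 * exp (\<beta> * s)" using M[of "(y, s)"] y s by simp
    qed
  next
    case (Suc n)
    show ?case
    proof (intro ballI)
      fix y :: "real^'n" and s assume y: "y \<in> Simplex" and s: "s \<in> {0..t}"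
      then have s0: "0 \<le> s" by auto
      have c0: "0 \<le> M / 2 ^ n" using M0 by simp
      have "\<bar>w (y, s)\<bar> = \<bar>integral {0..s} (\<lambda>r. Jop lam gam f0 f (\<lambda>z. w (z, r)) (Y y (r - s)))\<bar>"
        using wint[OF y s0] by simp
      also have "\<dots> \<le> Kc * (M / 2 ^ n) / \<beta> * exp (\<beta> * s)"
      proof (rule int_est[OF Jint_int[OF cw y] s0 beta_pos mult_nonneg_nonneg[OF Kc_nonneg c0]])
        fix r assume r: "r \<in> {0..s}"
        have "\<bar>Jop lam gam f0 f (\<lambda>z. w (z, r)) (Y y (r - s))\<bar> \<le> Kc * (M / 2 ^ n * exp (\<beta> * r))"
          by (rule Jop_bound[OF Y_in[OF y]]) (use Suc.IH r s in auto)
        then show "\<bar>Jop lam gam f0 f (\<lambda>z. w (z, r)) (Y y (r - s))\<bar> \<le> Kc * (M / 2 ^ n) * exp (\<beta> * r)"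
          by (simp add: mult.assoc)
      qed
      also have "\<dots> \<le> (M / 2 ^ n) / 2 * exp (\<beta> * s)"
        by (intro mult_right_mono beta_half c0) simp
      finally show "\<bar>w (y, s)\<bar> \<le> M / 2 ^ Suc n * exp (\<beta> * s)" by simp
    qed
  qed
  have "w (x, t) = 0"
  proof (rule ccontr)
    assume ne: "w (x, t) \<noteq> 0"
    obtain n where n: "M * exp (\<beta> * t) / \<bar>w (x, t)\<bar> < 2 ^ n"
      using real_arch_pow[of 2] by auto
    have "\<bar>w (x, t)\<bar> \<le> M / 2 ^ n * exp (\<beta> * t)" using claim[of n] x t by auto
    then have "\<bar>w (x, t)\<bar> * 2 ^ n \<le> M * exp (\<beta> * t)" by (simp add: field_simps)
    moreover have "M * exp (\<beta> * t) < \<bar>w (x, t)\<bar> * 2 ^ n" using n ne by (simp add: field_simps)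
    ultimately show False by simp
  qed
  then show "v (x, t) $ k = u (x, t) $ k" by (simp add: w_def)
qed

end


definition PhiK where
  "PhiK lam gam f0 f Y k h z = Y (fst z) (- snd z) $ k
     + integral {0..snd z} (\<lambda>s. Jop lam gam f0 f (\<lambda>y. h (y, s)) (Y (fst z) (s - snd z)))"

context mild begin

lemma PhiK_cont:
  assumes h: "continuous_on (Simplex \<times> {0..}) h"
  shows "continuous_on (Simplex \<times> {0..}) (PhiK lam gam f0 f Y k h)"
proof -
  have c1: "continuous_on (Simplex \<times> {0..}) (\<lambda>z. Y (fst z) (- snd z) $ k)"
  proof -
    have "continuous_on (Simplex \<times> {0..}) ((\<lambda>(x, t). Y x t) \<circ> (\<lambda>z. (fst z, - snd z)))"
      by (rule continuous_on_compose[OF _ continuous_on_subset[OF Y_cont]])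
         (auto intro!: continuous_intros)
    then show ?thesis by (intro continuous_on_component) (simp add: o_def case_prod_beta)
  qed
  let ?D = "Simplex \<times> {0::real..} \<times> {0::real..}"
  have pc: "continuous_on ?D (\<lambda>z. Y (fst z) (snd (snd z) - fst (snd z)))"
  proof -
    have "continuous_on ?D ((\<lambda>(x, t). Y x t) \<circ> (\<lambda>z. (fst z, snd (snd z) - fst (snd z))))"
      by (rule continuous_on_compose[OF _ continuous_on_subset[OF Y_cont]])
         (auto intro!: continuous_intros)
    then show ?thesis by (simp add: o_def case_prod_beta)
  qed
  have J: "continuous_on ?D (\<lambda>z. Jop lam gam f0 f (\<lambda>y. h (y, snd (snd z))) (Y (fst z) (snd (snd z) - fst (snd z))))"
    by (rule Jop_cont[OF h pc]) (auto intro: Y_in intro!: continuous_intros)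
  have c2: "continuous_on (Simplex \<times> {0..}) (\<lambda>(x, t). integral {0..t} (\<lambda>s. Jop lam gam f0 f (\<lambda>y. h (y, s)) (Y x (s - t))))"
    by (rule int_cont) (use J in \<open>simp add: case_prod_beta\<close>)
  have "continuous_on (Simplex \<times> {0..}) (\<lambda>z. Y (fst z) (- snd z) $ k
     + integral {0..snd z} (\<lambda>s. Jop lam gam f0 f (\<lambda>y. h (y, s)) (Y (fst z) (s - snd z))))"
    using continuous_on_add[OF c1 c2] by (simp add: case_prod_beta)
  then show ?thesis unfolding PhiK_def[abs_def] .
qed

lemma int_part_bound:
  assumes h: "continuous_on (Simplex \<times> {0..}) h" and x: "x \<in> Simplex" and t: "0 \<le> t" and C: "0 \<le> C"
    and hb: "\<And>y s. y \<in> Simplex \<Longrightarrow> 0 \<le> s \<Longrightarrow> \<bar>h (y, s)\<bar> \<le> C * exp (\<beta> * s)"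
  shows "\<bar>integral {0..t} (\<lambda>s. Jop lam gam f0 f (\<lambda>y. h (y, s)) (Y x (s - t)))\<bar> \<le> Kc * C / \<beta> * exp (\<beta> * t)"
proof (rule int_est[OF Jint_int[OF h x] t beta_pos mult_nonneg_nonneg[OF Kc_nonneg C]])
  fix r assume r: "r \<in> {0..t}"
  have "\<bar>Jop lam gam f0 f (\<lambda>y. h (y, r)) (Y x (r - t))\<bar> \<le> Kc * (C * exp (\<beta> * r))"
    by (rule Jop_bound[OF Y_in[OF x]]) (use hb r in auto)
  then show "\<bar>Jop lam gam f0 f (\<lambda>y. h (y, r)) (Y x (r - t))\<bar> \<le> Kc * C * exp (\<beta> * r)"
    by (simp add: mult.assoc)
qed

definition RR :: "'n \<Rightarrow> (((real^'n) \<times> real) \<Rightarrow>\<^sub>C real) \<Rightarrow> ((real^'n) \<times> real) \<Rightarrow> real" where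
  "RR k w z = exp (- \<beta> * max 0 (snd z)) *
     PhiK lam gam f0 f Y k (\<lambda>z. exp (\<beta> * snd z) * apply_bcontfun w z) (closest_point Simplex (fst z), max 0 (snd z))"

lemma hw_cont: "continuous_on A (\<lambda>z. exp (\<beta> * snd z) * apply_bcontfun w z)"
  by (intro continuous_intros continuous_on_apply_bcontfun)

lemma cp_in: "closest_point Simplex x \<in> Simplex"
  by (rule closest_point_in_set[OF simplex_closed]) (use simplex_zero in auto)

lemma RR_cont: "continuous_on UNIV (RR k w)"
proof -
  have g: "continuous_on UNIV (\<lambda>z::((real^'n) \<times> real). (closest_point Simplex (fst z), max 0 (snd z)))"
    by (intro continuous_on_Pair continuous_on_max continuous_on_const continuous_on_snd continuous_on_fst
        continuous_on_id continuous_on_compose2[OF continuous_on_closest_point[OF simplex_convex simplex_closed]])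
       (use simplex_zero in auto)
  have "continuous_on UNIV (PhiK lam gam f0 f Y k (\<lambda>z. exp (\<beta> * snd z) * apply_bcontfun w z) \<circ>
          (\<lambda>z::((real^'n) \<times> real). (closest_point Simplex (fst z), max 0 (snd z))))"
    by (rule continuous_on_compose[OF g continuous_on_subset[OF PhiK_cont[OF hw_cont]]]) (auto simp: cp_in)
  then show ?thesis unfolding RR_def[abs_def]
    by (intro continuous_on_mult continuous_intros) (simp add: o_def)
qed

lemma RR_bound: "\<bar>RR k w z\<bar> \<le> 1 + Kc * norm w / \<beta>"
proof -
  define x where "x = closest_point Simplex (fst z)"
  define t where "t = max 0 (snd z)"
  have x: "x \<in> Simplex" unfolding x_def by (rule cp_in)
  have t: "0 \<le> t" unfolding t_def by simp
  have I0: "\<bar>integral {0..t} (\<lambda>s. Jop lam gam f0 f (\<lambda>y. exp (\<beta> * snd (y, s)) * apply_bcontfun w (y, s)) (Y x (s - t)))\<bar>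
      \<le> Kc * norm w / \<beta> * exp (\<beta> * t)"
  proof (rule int_part_bound[OF hw_cont x t norm_ge_zero])
    fix y s
    have "\<bar>apply_bcontfun w (y, s)\<bar> \<le> norm w" using norm_bounded[of w "(y, s)"] by simp
    then have "exp (\<beta> * s) * \<bar>apply_bcontfun w (y, s)\<bar> \<le> exp (\<beta> * s) * norm w"
      by (rule mult_left_mono) simp
    then show "\<bar>(\<lambda>z. exp (\<beta> * snd z) * apply_bcontfun w z) (y, s)\<bar> \<le> norm w * exp (\<beta> * s)"
      by (simp add: abs_mult mult.commute)
  qed
  then have I: "\<bar>integral {0..t} (\<lambda>s. Jop lam gam f0 f (\<lambda>y. exp (\<beta> * s) * apply_bcontfun w (y, s)) (Y x (s - t)))\<bar>
      \<le> Kc * norm w / \<beta> * exp (\<beta> * t)" by simp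
  have Yk: "\<bar>Y x (- t) $ k\<bar> \<le> 1"
    using simplex_nonneg[OF Y_in[OF x]] simplex_le1[OF Y_in[OF x]] by (simp add: abs_le_iff)
  have "\<bar>RR k w z\<bar> = exp (- \<beta> * t) * \<bar>Y x (- t) $ k + integral {0..t} (\<lambda>s. Jop lam gam f0 f (\<lambda>y. exp (\<beta> * s) * apply_bcontfun w (y, s)) (Y x (s - t)))\<bar>"
    unfolding RR_def PhiK_def x_def t_def by (simp add: abs_mult)
  also have "\<dots> \<le> exp (- \<beta> * t) * (1 + Kc * norm w / \<beta> * exp (\<beta> * t))"
    by (intro mult_left_mono) (use I Yk in \<open>auto intro: order_trans[OF abs_triangle_ineq]\<close>)
  also have "\<dots> = exp (- \<beta> * t) + Kc * norm w / \<beta> * (exp (- \<beta> * t) * exp (\<beta> * t))"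
    by (simp add: algebra_simps)
  also have "exp (- \<beta> * t) * exp (\<beta> * t) = 1" unfolding exp_add[symmetric] by simp
  also have "exp (- \<beta> * t) \<le> 1" using t beta_pos by simp
  finally show ?thesis by simp
qed

end


context mild begin

lemma RR_in: "RR k w \<in> bcontfun"
  by (rule bcontfun_normI[OF RR_cont, where b="1 + Kc * norm w / \<beta>"]) (simp add: RR_bound)

lemma RR_contr: "\<bar>RR k a z - RR k b z\<bar> \<le> 1 / 2 * dist a b"
proof -
  define x where "x = closest_point Simplex (fst z)"
  define t where "t = max 0 (snd z)"
  have x: "x \<in> Simplex" unfolding x_def by (rule cp_in)
  have t: "0 \<le> t" unfolding t_def by simp
  define Ia where "Ia = integral {0..t} (\<lambda>s. Jop lam gam f0 f (\<lambda>y. exp (\<beta> * s) * apply_bcontfun a (y, s)) (Y x (s - t)))"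
  define Ib where "Ib = integral {0..t} (\<lambda>s. Jop lam gam f0 f (\<lambda>y. exp (\<beta> * s) * apply_bcontfun b (y, s)) (Y x (s - t)))"
  have ia: "(\<lambda>s. Jop lam gam f0 f (\<lambda>y. exp (\<beta> * s) * apply_bcontfun a (y, s)) (Y x (s - t))) integrable_on {0..t}"
    using Jint_int[OF hw_cont[of _ a] x, of t] by simp
  have ib: "(\<lambda>s. Jop lam gam f0 f (\<lambda>y. exp (\<beta> * s) * apply_bcontfun b (y, s)) (Y x (s - t))) integrable_on {0..t}"
    using Jint_int[OF hw_cont[of _ b] x, of t] by simp
  have hd: "continuous_on (Simplex \<times> {0..}) (\<lambda>z. exp (\<beta> * snd z) * apply_bcontfun a z - exp (\<beta> * snd z) * apply_bcontfun b z)"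
    by (intro continuous_on_diff hw_cont)
  have "Ia - Ib = integral {0..t} (\<lambda>s. Jop lam gam f0 f (\<lambda>y. exp (\<beta> * s) * apply_bcontfun a (y, s)) (Y x (s - t))
       - Jop lam gam f0 f (\<lambda>y. exp (\<beta> * s) * apply_bcontfun b (y, s)) (Y x (s - t)))"
    unfolding Ia_def Ib_def by (rule integral_diff[OF ia ib, symmetric])
  also have "\<dots> = integral {0..t} (\<lambda>s. Jop lam gam f0 f (\<lambda>y. (\<lambda>z. exp (\<beta> * snd z) * apply_bcontfun a z - exp (\<beta> * snd z) * apply_bcontfun b z) (y, s)) (Y x (s - t)))"
    unfolding Jop_diff by simp
  finally have e1: "Ia - Ib = \<dots>" .
  have bnd: "\<bar>Ia - Ib\<bar> \<le> Kc * dist a b / \<beta> * exp (\<beta> * t)"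
    unfolding e1
  proof (rule int_part_bound[OF hd x t zero_le_dist])
    fix y s
    have "\<bar>apply_bcontfun a (y, s) - apply_bcontfun b (y, s)\<bar> \<le> dist a b"
      using dist_bounded[of a "(y, s)" b] by (simp add: dist_real_def)
    then have ineq: "exp (\<beta> * s) * \<bar>apply_bcontfun a (y, s) - apply_bcontfun b (y, s)\<bar> \<le> exp (\<beta> * s) * dist a b"
      by (rule mult_left_mono) simp
    have eq: "(\<lambda>z. exp (\<beta> * snd z) * apply_bcontfun a z - exp (\<beta> * snd z) * apply_bcontfun b z) (y, s)
        = exp (\<beta> * s) * (apply_bcontfun a (y, s) - apply_bcontfun b (y, s))"
      by (simp add: right_diff_distrib)
    show "\<bar>(\<lambda>z. exp (\<beta> * snd z) * apply_bcontfun a z - exp (\<beta> * snd z) * apply_bcontfun b z) (y, s)\<bar> \<le> dist a b * exp (\<beta> * s)"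
      unfolding eq abs_mult abs_of_pos[OF exp_gt_zero] using ineq by (metis mult.commute)
  qed
  have "RR k a z - RR k b z = exp (- \<beta> * t) * (Ia - Ib)"
    unfolding RR_def PhiK_def Ia_def Ib_def x_def t_def by (simp add: algebra_simps)
  then have "\<bar>RR k a z - RR k b z\<bar> = exp (- \<beta> * t) * \<bar>Ia - Ib\<bar>" by (simp add: abs_mult)
  also have "\<dots> \<le> exp (- \<beta> * t) * (Kc * dist a b / \<beta> * exp (\<beta> * t))"
    using bnd by (rule mult_left_mono) simp
  also have "\<dots> = Kc * dist a b / \<beta> * (exp (- \<beta> * t) * exp (\<beta> * t))" by (simp add: algebra_simps)
  also have "exp (- \<beta> * t) * exp (\<beta> * t) = 1" unfolding exp_add[symmetric] by simp
  also have "Kc * dist a b / \<beta> * 1 \<le> dist a b / 2" using beta_half[OF zero_le_dist] by simp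
  finally show ?thesis by simp
qed

lemma exist_comp:
  "\<exists>U. continuous_on (Simplex \<times> {0..}) U \<and>
     (\<forall>x\<in>Simplex. \<forall>t\<ge>0. U (x, t) = Y x (- t) $ k +
        integral {0..t} (\<lambda>s. Jop lam gam f0 f (\<lambda>y. U (y, s)) (Y x (s - t))))"
proof -
  define \<Psi> where "\<Psi> = (\<lambda>w. Bcontfun (RR k w))"
  have ap: "apply_bcontfun (\<Psi> w) = RR k w" for w
    unfolding \<Psi>_def by (rule Bcontfun_inverse[OF RR_in])
  have "\<exists>!w. \<Psi> w = w"
  proof (rule banach_fix_type[of "1/2"])
    show "\<forall>a b. dist (\<Psi> a) (\<Psi> b) \<le> 1 / 2 * dist a b"
    proof (intro allI)
      fix a b
      show "dist (\<Psi> a) (\<Psi> b) \<le> 1 / 2 * dist a b"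
        by (rule dist_bound) (simp only: ap dist_real_def, rule RR_contr)
    qed
  qed auto
  then obtain w where w: "\<Psi> w = w" by blast
  define U where "U = (\<lambda>z. exp (\<beta> * snd z) * apply_bcontfun w z)"
  show ?thesis
  proof (intro exI[of _ U] conjI ballI allI impI)
    show "continuous_on (Simplex \<times> {0..}) U" unfolding U_def by (rule hw_cont)
    fix x :: "real^'n" and t :: real assume x: "x \<in> Simplex" and t: "0 \<le> t"
    have cpx: "closest_point Simplex x = x" by (rule closest_point_self[OF x])
    have "apply_bcontfun w (x, t) = RR k w (x, t)" using ap[of w] w by simp
    also have "\<dots> = exp (- \<beta> * t) * PhiK lam gam f0 f Y k U (x, t)"
      unfolding RR_def U_def using t cpx by simp
    finally have "U (x, t) = exp (\<beta> * t) * (exp (- \<beta> * t) * PhiK lam gam f0 f Y k U (x, t))"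
      unfolding U_def by simp
    also have "\<dots> = (exp (\<beta> * t) * exp (- \<beta> * t)) * PhiK lam gam f0 f Y k U (x, t)" by simp
    also have "exp (\<beta> * t) * exp (- \<beta> * t) = 1" unfolding exp_add[symmetric] by simp
    finally show "U (x, t) = Y x (- t) $ k + integral {0..t} (\<lambda>s. Jop lam gam f0 f (\<lambda>y. U (y, s)) (Y x (s - t)))"
      unfolding PhiK_def by simp
  qed
qed

end


theorem proposition3p5:
  fixes f0 :: "real ^ 'n::finite \<Rightarrow> real"
    and f :: "'n \<Rightarrow> real ^ 'n \<Rightarrow> real"
    and lam gam :: "'n option \<Rightarrow> 'n option \<Rightarrow> real"
    and Y :: "real ^ 'n \<Rightarrow> real \<Rightarrow> real ^ 'n"
  assumes f0_lip: "\<exists>L. L-lipschitz_on Simplex f0"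
    and f_lip: "\<And>k. \<exists>L. L-lipschitz_on Simplex (f k)"
    and f0_nonneg: "\<And>x. x \<in> Simplex \<Longrightarrow> 0 \<le> f0 x"
    and f_nonneg: "\<And>k x. x \<in> Simplex \<Longrightarrow> 0 \<le> f k x"
    and lam_pos: "\<And>i j. i \<noteq> j \<Longrightarrow> 0 < lam i j"
    and gam_range: "\<And>i j. i \<noteq> j \<Longrightarrow> 0 < gam i j \<and> gam i j \<le> 1"
    and Y_init: "\<And>x. x \<in> Simplex \<Longrightarrow> Y x 0 = x"
    and Y_in: "\<And>x t. x \<in> Simplex \<Longrightarrow> Y x t \<in> Simplex"
    and Y_ode: "\<And>x t. x \<in> Simplex \<Longrightarrow>
                  (Y x has_vector_derivative drift f0 f (Y x t)) (at t)"
  shows "\<exists>u. global_mild_solution lam gam f0 f Y u \<and>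
           (\<forall>v. global_mild_solution lam gam f0 f Y v \<longrightarrow>
                (\<forall>x\<in>Simplex. \<forall>t\<ge>0. v (x, t) = u (x, t)))"
proof -
  interpret m: mild f0 f lam gam Y
    by (rule mild.intro) (fact f0_lip f_lip gam_range Y_init Y_in Y_ode)+
  have "\<forall>k. \<exists>U. continuous_on (Simplex \<times> {0..}) U \<and>
     (\<forall>x\<in>Simplex. \<forall>t\<ge>0. U (x, t) = Y x (- t) $ k +
        integral {0..t} (\<lambda>s. Jop lam gam f0 f (\<lambda>y. U (y, s)) (Y x (s - t))))"
  proof
    fix k show "\<exists>U. continuous_on (Simplex \<times> {0..}) U \<and>
     (\<forall>x\<in>Simplex. \<forall>t\<ge>0. U (x, t) = Y x (- t) $ k +
        integral {0..t} (\<lambda>s. Jop lam gam f0 f (\<lambda>y. U (y, s)) (Y x (s - t))))"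
      by (rule m.exist_comp)
  qed
  from choice[OF this] obtain UU where UU0: "\<forall>k. continuous_on (Simplex \<times> {0..}) (UU k) \<and>
     (\<forall>x\<in>Simplex. \<forall>t\<ge>0. UU k (x, t) = Y x (- t) $ k +
        integral {0..t} (\<lambda>s. Jop lam gam f0 f (\<lambda>y. UU k (y, s)) (Y x (s - t))))" ..
  have UU: "\<And>k. continuous_on (Simplex \<times> {0..}) (UU k)"
    "\<And>k x t. x \<in> Simplex \<Longrightarrow> 0 \<le> t \<Longrightarrow> UU k (x, t) = Y x (- t) $ k +
        integral {0..t} (\<lambda>s. Jop lam gam f0 f (\<lambda>y. UU k (y, s)) (Y x (s - t)))"
    using UU0 by auto
  define u where "u = (\<lambda>z. \<chi> k. UU k z)"
  have gu: "global_mild_solution lam gam f0 f Y u"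
    unfolding global_mild_solution_def
  proof (intro conjI ballI allI impI)
    show "continuous_on (Simplex \<times> {0..}) u"
      unfolding u_def by (intro continuous_on_vec_lambda UU(1))
    fix x :: "real^'n" and t :: real and k assume "x \<in> Simplex" "0 \<le> t"
    then show "u (x, t) $ k = Y x (- t) $ k +
          integral {0..t} (\<lambda>s. Jop lam gam f0 f (\<lambda>y. u (y, s) $ k) (Y x (s - t)))"
      unfolding u_def using UU(2) by simp
  qed
  show ?thesis
  proof (intro exI[of _ u] conjI gu allI impI ballI)
    fix v and x :: "real^'n" and t assume v: "global_mild_solution lam gam f0 f Y v" and x: "x \<in> Simplex" and t: "(0::real) \<le> t"
    show "v (x, t) = u (x, t)" by (rule m.uniq[OF gu v x t])
  qed
qed


end
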